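(* Let $\mathcal T$ be an orbital category. The monotone map $c:\mathrm{wIndSys}_{\mathcal T}\to\mathrm{Fam}_{\mathcal T}$ has a fully faithful left adjoint $\mathcal F\mapsto\underline{\mathbb F}^{triv}_{\mathcal F}$ and a fully faithful right adjoint $\mathcal F\mapsto\underline{\mathbb F}_{\mathcal F}$.
   Context: For a small category $\mathcal T$, $\mathbb F_{\mathcal T}$ is the full subcategory of $\mathrm{Fun}(\mathcal T^{op},\mathrm{Set})$ on finite coproducts of representables; $\mathcal T$ is orbital if $\mathbb F_{\mathcal T}$ has pullbacks. $\mathbb F_V:=\mathbb F_{\mathcal T,/V}$, $*_V$ terminal; for $U\to V$, $\mathrm{Res}^V_U$ is pullback and $\mathrm{Ind}^V_U$ postcomposition. A full $\mathcal T$-subcategory $\mathcal C$ assigns isomorphism-closed classes $\mathcal C_V\subseteq\mathrm{Ob}\,\mathbb F_V$ stable under restriction. For $S\in\mathbb F_V$ with orbits $U$ and $T_U\in\mathbb F_U$, $\coprod_U^ST_U:=\coprod_U\mathrm{Ind}_U^VT_U$. A $\mathcal T$-weak indexing system is a full $\mathcal T$-subcategory with $\mathcal C_V\neq\emptyset\Rightarrow *_V\in\mathcal C_V$ and closed under $\coprod^S_UT_U$ for $S\in\mathcal C_V$, $T_U\in\mathcal C_U$; $\mathrm{wIndSys}_{\mathcal T}$ is their poset under inclusion. A $\mathcal T$-family is a full subcategory $\mathcal F$ with $V\to W$, $W\in\mathcal F$ $\Rightarrow V\in\mathcal F$; $\mathrm{Fam}_{\mathcal T}$ is their poset. $c(\mathcal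 C)=\{V\mid *_V\in\mathcal C_V\}$. For a family $\mathcal F$: $\underline{\mathbb F}^{triv}_{\mathcal F}$ has $V$-value $\{*_V\}$ (up to isomorphism) for $V\in\mathcal F$ and $\emptyset$ otherwise; $\underline{\mathbb F}_{\mathcal F}$ has $V$-value all of $\mathbb F_V$ for $V\in\mathcal F$ and $\emptyset$ otherwise. A monotone map $L$ is left adjoint to $\pi$ if $L(x)\le y\iff x\le\pi(y)$; it is fully faithful if it reflects the order. *)

theory Defs
  imports Main
begin

record ('o,'m) category =
  obj :: "'o set"
  hom :: "'o \<Rightarrow> 'o \<Rightarrow> 'm set"
  cmp :: "'m \<Rightarrow> 'm \<Rightarrow> 'm"   (* cmp g f = g \<circ> f *)
  idn :: "'o \<Rightarrow> 'm"

definition small_category :: "('o,'m) category \<Rightarrow> bool" where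
  "small_category T \<longleftrightarrow>
     (\<forall>A B. hom T A B \<noteq> {} \<longrightarrow> A \<in> obj T \<and> B \<in> obj T) \<and>
     (\<forall>A\<in>obj T. idn T A \<in> hom T A A) \<and>
     (\<forall>A B C f g. f \<in> hom T A B \<longrightarrow> g \<in> hom T B C \<longrightarrow> cmp T g f \<in> hom T A C) \<and>
     (\<forall>A B C D f g h. f \<in> hom T A B \<longrightarrow> g \<in> hom T B C \<longrightarrow> h \<in> hom T C D \<longrightarrow>
        cmp T h (cmp T g f) = cmp T (cmp T h g) f) \<and>
     (\<forall>A B f. f \<in> hom T A B \<longrightarrow> cmp T (idn T B) f = f \<and> cmp T f (idn T A) = f)"

text \<open>An object of F_T is (a canonical representative of) a finite coproduct of
 representable presheaves, given by the list of representing objects. Its value at W is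
 the set of pairs (i,a) with a : W \<rightarrow> xs!i. Morphisms are natural transformations
 (extensional: undefined outside their domain).\<close>

definition FT_ob :: "('o,'m) category \<Rightarrow> 'o list set" where
  "FT_ob T = {xs. set xs \<subseteq> obj T}"

definition rep_el :: "('o,'m) category \<Rightarrow> 'o list \<Rightarrow> 'o \<Rightarrow> (nat \<times> 'm) set" where
  "rep_el T xs W = {(i,a). i < length xs \<and> a \<in> hom T W (xs ! i)}"

definition act :: "('o,'m) category \<Rightarrow> 'm \<Rightarrow> nat \<times> 'm \<Rightarrow> nat \<times> 'm" where
  "act T g x = (fst x, cmp T (snd x) g)"

type_synonym ('o,'m) ftmor = "'o \<Rightarrow> nat \<times> 'm \<Rightarrow> nat \<times> 'm"

definition FT_hom :: "('o,'m) category \<Rightarrow> 'o list \<Rightarrow> 'o list \<Rightarrow> ('o,'m) ftmor set" where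
  "FT_hom T xs ys = {\<eta>.
     (\<forall>W\<in>obj T. \<forall>x\<in>rep_el T xs W. \<eta> W x \<in> rep_el T ys W) \<and>
     (\<forall>W W' g x. W \<in> obj T \<longrightarrow> W' \<in> obj T \<longrightarrow> g \<in> hom T W' W \<longrightarrow> x \<in> rep_el T xs W \<longrightarrow>
         \<eta> W' (act T g x) = act T g (\<eta> W x)) \<and>
     (\<forall>W x. \<not> (W \<in> obj T \<and> x \<in> rep_el T xs W) \<longrightarrow> \<eta> W x = undefined)}"

definition FT_id :: "('o,'m) category \<Rightarrow> 'o list \<Rightarrow> ('o,'m) ftmor" where
  "FT_id T xs = (\<lambda>W x. if W \<in> obj T \<and> x \<in> rep_el T xs W then x else undefined)"

text \<open>Composition \<psi> \<circ> \<eta>, where xs is the domain of \<eta>.\<close>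
definition FT_comp :: "('o,'m) category \<Rightarrow> 'o list \<Rightarrow> ('o,'m) ftmor \<Rightarrow> ('o,'m) ftmor \<Rightarrow> ('o,'m) ftmor" where
  "FT_comp T xs \<psi> \<eta> = (\<lambda>W x. if W \<in> obj T \<and> x \<in> rep_el T xs W then \<psi> W (\<eta> W x) else undefined)"

definition FT_iso :: "('o,'m) category \<Rightarrow> 'o list \<Rightarrow> 'o list \<Rightarrow> ('o,'m) ftmor \<Rightarrow> bool" where
  "FT_iso T xs ys \<phi> \<longleftrightarrow> \<phi> \<in> FT_hom T xs ys \<and>
     (\<exists>\<psi>\<in>FT_hom T ys xs. FT_comp T xs \<psi> \<phi> = FT_id T xs \<and> FT_comp T ys \<phi> \<psi> = FT_id T ys)"

definition is_pullback :: "('o,'m) category \<Rightarrow> 'o list \<Rightarrow> 'o list \<Rightarrow> 'o list \<Rightarrow>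
    ('o,'m) ftmor \<Rightarrow> ('o,'m) ftmor \<Rightarrow> 'o list \<Rightarrow> ('o,'m) ftmor \<Rightarrow> ('o,'m) ftmor \<Rightarrow> bool" where
  "is_pullback T X Y Z f g P r q \<longleftrightarrow>
     P \<in> FT_ob T \<and> r \<in> FT_hom T P X \<and> q \<in> FT_hom T P Y \<and>
     FT_comp T P f r = FT_comp T P g q \<and>
     (\<forall>Q\<in>FT_ob T. \<forall>a\<in>FT_hom T Q X. \<forall>b\<in>FT_hom T Q Y. FT_comp T Q f a = FT_comp T Q g b \<longrightarrow>
        (\<exists>!m. m \<in> FT_hom T Q P \<and> FT_comp T Q r m = a \<and> FT_comp T Q q m = b))"

definition orbital :: "('o,'m) category \<Rightarrow> bool" where
  "orbital T \<longleftrightarrow> small_category T \<and>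
     (\<forall>X\<in>FT_ob T. \<forall>Y\<in>FT_ob T. \<forall>Z\<in>FT_ob T. \<forall>f\<in>FT_hom T X Z. \<forall>g\<in>FT_hom T Y Z.
        \<exists>P r q. is_pullback T X Y Z f g P r q)"

definition is_coproduct :: "('o,'m) category \<Rightarrow> nat \<Rightarrow> (nat \<Rightarrow> 'o list) \<Rightarrow> 'o list \<Rightarrow>
    (nat \<Rightarrow> ('o,'m) ftmor) \<Rightarrow> bool" where
  "is_coproduct T n Ts X j \<longleftrightarrow>
     X \<in> FT_ob T \<and> (\<forall>i<n. Ts i \<in> FT_ob T \<and> j i \<in> FT_hom T (Ts i) X) \<and>
     (\<forall>Y\<in>FT_ob T. \<forall>m. (\<forall>i<n. m i \<in> FT_hom T (Ts i) Y) \<longrightarrow>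
        (\<exists>!u. u \<in> FT_hom T X Y \<and> (\<forall>i<n. FT_comp T (Ts i) u (j i) = m i)))"

definition incl :: "('o,'m) category \<Rightarrow> 'o list \<Rightarrow> nat \<Rightarrow> ('o,'m) ftmor" where
  "incl T S i = (\<lambda>W x. if W \<in> obj T \<and> x \<in> rep_el T [S ! i] W then (i, snd x) else undefined)"

type_synonym ('o,'m) sobj = "'o list \<times> ('o,'m) ftmor"

definition slice_ob :: "('o,'m) category \<Rightarrow> 'o \<Rightarrow> ('o,'m) sobj set" where
  "slice_ob T V = {(S,p). V \<in> obj T \<and> S \<in> FT_ob T \<and> p \<in> FT_hom T S [V]}"

definition slice_iso :: "('o,'m) category \<Rightarrow> 'o \<Rightarrow> ('o,'m) sobj \<Rightarrow> ('o,'m) sobj \<Rightarrow> bool" where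
  "slice_iso T V A B \<longleftrightarrow> A \<in> slice_ob T V \<and> B \<in> slice_ob T V \<and>
     (\<exists>\<phi>. FT_iso T (fst A) (fst B) \<phi> \<and> FT_comp T (fst A) (snd B) \<phi> = snd A)"

definition terminal_slice :: "('o,'m) category \<Rightarrow> 'o \<Rightarrow> ('o,'m) sobj" where
  "terminal_slice T V = ([V], FT_id T [V])"

type_synonym ('o,'m) tsub = "'o \<Rightarrow> ('o,'m) sobj set"

definition full_T_subcat :: "('o,'m) category \<Rightarrow> ('o,'m) tsub \<Rightarrow> bool" where
  "full_T_subcat T C \<longleftrightarrow>
     (\<forall>V. C V \<subseteq> slice_ob T V) \<and>
     (\<forall>V A B. A \<in> C V \<longrightarrow> slice_iso T V A B \<longrightarrow> B \<in> C V) \<and>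
     \<comment> \<open>stability under restriction Res^V_U (pullback along U \<rightarrow> V)\<close>
     (\<forall>U V \<phi> S p P r q. U \<in> obj T \<longrightarrow> V \<in> obj T \<longrightarrow> \<phi> \<in> FT_hom T [U] [V] \<longrightarrow>
        (S,p) \<in> C V \<longrightarrow> is_pullback T S [U] [V] p \<phi> P r q \<longrightarrow> (P,q) \<in> C U)"

definition weak_indexing_system :: "('o,'m) category \<Rightarrow> ('o,'m) tsub \<Rightarrow> bool" where
  "weak_indexing_system T C \<longleftrightarrow> full_T_subcat T C \<and>
     (\<forall>V. C V \<noteq> {} \<longrightarrow> terminal_slice T V \<in> C V) \<and>
     \<comment> \<open>closure under \<coprod>^S_U T_U = \<coprod>_U Ind^V_U T_U\<close>
     (\<forall>V S p Ts qs X j h. (S,p) \<in> C V \<longrightarrow>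
        (\<forall>i<length S. (Ts i, qs i) \<in> C (S ! i)) \<longrightarrow>
        is_coproduct T (length S) Ts X j \<longrightarrow> h \<in> FT_hom T X [V] \<longrightarrow>
        (\<forall>i<length S. FT_comp T (Ts i) h (j i) =
             FT_comp T (Ts i) p (FT_comp T (Ts i) (incl T S i) (qs i))) \<longrightarrow>
        (X,h) \<in> C V)"

definition T_family :: "('o,'m) category \<Rightarrow> 'o set \<Rightarrow> bool" where
  "T_family T F \<longleftrightarrow> F \<subseteq> obj T \<and> (\<forall>V W f. f \<in> hom T V W \<longrightarrow> W \<in> F \<longrightarrow> V \<in> F)"

definition cfam :: "('o,'m) category \<Rightarrow> ('o,'m) tsub \<Rightarrow> 'o set" where
  "cfam T C = {V \<in> obj T. terminal_slice T V \<in> C V}"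

definition FF_triv :: "('o,'m) category \<Rightarrow> 'o set \<Rightarrow> ('o,'m) tsub" where
  "FF_triv T F = (\<lambda>V. if V \<in> F then {A. slice_iso T V A (terminal_slice T V)} else {})"

definition FF_full :: "('o,'m) category \<Rightarrow> 'o set \<Rightarrow> ('o,'m) tsub" where
  "FF_full T F = (\<lambda>V. if V \<in> F then slice_ob T V else {})"

end

theory Submission
  imports Defs
begin

lemma sc_obj: "small_category T \<Longrightarrow> f \<in> hom T A B \<Longrightarrow> A \<in> obj T \<and> B \<in> obj T"
  unfolding small_category_def by blast
lemma sc_id: "small_category T \<Longrightarrow> A \<in> obj T \<Longrightarrow> idn T A \<in> hom T A A"
  unfolding small_category_def by blast
lemma sc_comp: "small_category T \<Longrightarrow> f \<in> hom T A B \<Longrightarrow> g \<in> hom T B C \<Longrightarrow> cmp T g f \<in> hom T A C"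
  unfolding small_category_def by blast
lemma sc_assoc: "small_category T \<Longrightarrow> f \<in> hom T A B \<Longrightarrow> g \<in> hom T B C \<Longrightarrow> h \<in> hom T C D \<Longrightarrow>
   cmp T h (cmp T g f) = cmp T (cmp T h g) f"
  unfolding small_category_def by blast
lemma sc_idl: "small_category T \<Longrightarrow> f \<in> hom T A B \<Longrightarrow> cmp T (idn T B) f = f"
  unfolding small_category_def by blast
lemma sc_idr: "small_category T \<Longrightarrow> f \<in> hom T A B \<Longrightarrow> cmp T f (idn T A) = f"
  unfolding small_category_def by blast

lemma rep_el_iff: "x \<in> rep_el T xs W \<longleftrightarrow> fst x < length xs \<and> snd x \<in> hom T W (xs ! fst x)"
  by (cases x) (auto simp: rep_el_def)

lemma act_rep: "small_category T \<Longrightarrow> g \<in> hom T W' W \<Longrightarrow> x \<in> rep_el T xs W \<Longrightarrow> act T g x \<in> rep_el T xs W'"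
  by (auto simp: rep_el_iff act_def intro: sc_comp)

lemma FT_homD1: "\<eta> \<in> FT_hom T xs ys \<Longrightarrow> W \<in> obj T \<Longrightarrow> x \<in> rep_el T xs W \<Longrightarrow> \<eta> W x \<in> rep_el T ys W"
  unfolding FT_hom_def by blast
lemma FT_homD2: "\<eta> \<in> FT_hom T xs ys \<Longrightarrow> W \<in> obj T \<Longrightarrow> W' \<in> obj T \<Longrightarrow> g \<in> hom T W' W \<Longrightarrow> x \<in> rep_el T xs W
   \<Longrightarrow> \<eta> W' (act T g x) = act T g (\<eta> W x)"
  unfolding FT_hom_def by blast
lemma FT_homD3: "\<eta> \<in> FT_hom T xs ys \<Longrightarrow> \<not> (W \<in> obj T \<and> x \<in> rep_el T xs W) \<Longrightarrow> \<eta> W x = undefined"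
  unfolding FT_hom_def by blast

lemma FT_hom_ext:
  assumes "\<eta> \<in> FT_hom T xs ys" "\<eta>' \<in> FT_hom T xs zs"
    "\<And>W x. W \<in> obj T \<Longrightarrow> x \<in> rep_el T xs W \<Longrightarrow> \<eta> W x = \<eta>' W x"
  shows "\<eta> = \<eta>'"
proof (rule ext, rule ext)
  fix W x show "\<eta> W x = \<eta>' W x"
    using assms FT_homD3[OF assms(1), of W x] FT_homD3[OF assms(2), of W x]
    by (cases "W \<in> obj T \<and> x \<in> rep_el T xs W") auto
qed

lemma FT_id_hom: assumes sc: "small_category T" shows "FT_id T xs \<in> FT_hom T xs xs"
  unfolding FT_hom_def FT_id_def using act_rep[OF sc] by auto

lemma FT_comp_apply: "W \<in> obj T \<Longrightarrow> x \<in> rep_el T xs W \<Longrightarrow> FT_comp T xs \<psi> \<eta> W x = \<psi> W (\<eta> W x)"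
  by (simp add: FT_comp_def)

lemma FT_comp_hom:
  assumes sc: "small_category T" and e: "\<eta> \<in> FT_hom T xs ys" and p: "\<psi> \<in> FT_hom T ys zs"
  shows "FT_comp T xs \<psi> \<eta> \<in> FT_hom T xs zs"
  unfolding FT_hom_def
proof (intro CollectI conjI allI impI ballI)
  fix W x assume "W \<in> obj T" "x \<in> rep_el T xs W"
  then show "FT_comp T xs \<psi> \<eta> W x \<in> rep_el T zs W"
    using FT_homD1[OF e] FT_homD1[OF p] by (simp add: FT_comp_def)
next
  fix W W' g x assume a: "W \<in> obj T" "W' \<in> obj T" "g \<in> hom T W' W" "x \<in> rep_el T xs W"
  have r: "act T g x \<in> rep_el T xs W'" using act_rep[OF sc a(3,4)] .
  have "FT_comp T xs \<psi> \<eta> W' (act T g x) = \<psi> W' (\<eta> W' (act T g x))"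
    using a r by (simp add: FT_comp_def)
  also have "\<dots> = \<psi> W' (act T g (\<eta> W x))" using FT_homD2[OF e a] by simp
  also have "\<dots> = act T g (\<psi> W (\<eta> W x))" using FT_homD2[OF p a(1-3) FT_homD1[OF e a(1,4)]] .
  finally show "FT_comp T xs \<psi> \<eta> W' (act T g x) = act T g (FT_comp T xs \<psi> \<eta> W x)"
    using a by (simp add: FT_comp_def)
next
  fix W x assume "\<not> (W \<in> obj T \<and> x \<in> rep_el T xs W)"
  then show "FT_comp T xs \<psi> \<eta> W x = undefined" unfolding FT_comp_def by meson
qed

lemma FT_comp_idl: "\<eta> \<in> FT_hom T xs ys \<Longrightarrow> FT_comp T xs (FT_id T ys) \<eta> = \<eta>"
  apply (rule ext, rule ext)
  subgoal for W x using FT_homD1[of \<eta> T xs ys W x] FT_homD3[of \<eta> T xs ys W x]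
    by (auto simp: FT_comp_def FT_id_def)
  done

lemma FT_comp_idr: "\<eta> \<in> FT_hom T xs ys \<Longrightarrow> FT_comp T xs \<eta> (FT_id T xs) = \<eta>"
  apply (rule ext, rule ext)
  subgoal for W x using FT_homD3[of \<eta> T xs ys W x]
    by (auto simp: FT_comp_def FT_id_def)
  done

lemma FT_comp_assoc: "\<eta> \<in> FT_hom T xs ys \<Longrightarrow>
   FT_comp T xs \<chi> (FT_comp T xs \<psi> \<eta>) = FT_comp T xs (FT_comp T ys \<chi> \<psi>) \<eta>"
  unfolding FT_comp_def by (intro ext) (simp add: FT_homD1)


lemma FT_iso_hom: "FT_iso T xs ys \<phi> \<Longrightarrow> \<phi> \<in> FT_hom T xs ys"
  unfolding FT_iso_def by blast

lemma FT_iso_inv: "FT_iso T xs ys \<phi> \<Longrightarrow>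
   \<exists>\<psi>. FT_iso T ys xs \<psi> \<and> FT_comp T xs \<psi> \<phi> = FT_id T xs \<and> FT_comp T ys \<phi> \<psi> = FT_id T ys"
  unfolding FT_iso_def by blast

lemma FT_iso_id: "small_category T \<Longrightarrow> FT_iso T xs xs (FT_id T xs)"
  unfolding FT_iso_def using FT_id_hom FT_comp_idl by blast

lemma FT_iso_comp:
  assumes sc: "small_category T" and a: "FT_iso T xs ys \<phi>" and b: "FT_iso T ys zs \<chi>"
  shows "FT_iso T xs zs (FT_comp T xs \<chi> \<phi>)"
proof -
  obtain \<phi>' where p: "\<phi>' \<in> FT_hom T ys xs" "FT_comp T xs \<phi>' \<phi> = FT_id T xs" "FT_comp T ys \<phi> \<phi>' = FT_id T ys"
    using a unfolding FT_iso_def by blast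
  obtain \<chi>' where c: "\<chi>' \<in> FT_hom T zs ys" "FT_comp T ys \<chi>' \<chi> = FT_id T ys" "FT_comp T zs \<chi> \<chi>' = FT_id T zs"
    using b unfolding FT_iso_def by blast
  have ph: "\<phi> \<in> FT_hom T xs ys" and ch: "\<chi> \<in> FT_hom T ys zs" using a b FT_iso_hom by blast+
  have 1: "FT_comp T xs (FT_comp T zs \<phi>' \<chi>') (FT_comp T xs \<chi> \<phi>) = FT_id T xs"
  proof -
    have "FT_comp T xs (FT_comp T zs \<phi>' \<chi>') (FT_comp T xs \<chi> \<phi>)
        = FT_comp T xs (FT_comp T ys (FT_comp T zs \<phi>' \<chi>') \<chi>) \<phi>" using FT_comp_assoc[OF ph] .
    also have "FT_comp T ys (FT_comp T zs \<phi>' \<chi>') \<chi> = FT_comp T ys \<phi>' (FT_comp T ys \<chi>' \<chi>)"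
      using FT_comp_assoc[OF ch] by metis
    also have "\<dots> = \<phi>'" using c(2) FT_comp_idr[OF p(1)] by simp
    finally show ?thesis using p(2) by simp
  qed
  have 2: "FT_comp T zs (FT_comp T xs \<chi> \<phi>) (FT_comp T zs \<phi>' \<chi>') = FT_id T zs"
  proof -
    have "FT_comp T zs (FT_comp T xs \<chi> \<phi>) (FT_comp T zs \<phi>' \<chi>')
        = FT_comp T zs (FT_comp T ys (FT_comp T xs \<chi> \<phi>) \<phi>') \<chi>'" using FT_comp_assoc[OF c(1)] .
    also have "FT_comp T ys (FT_comp T xs \<chi> \<phi>) \<phi>' = FT_comp T ys \<chi> (FT_comp T ys \<phi> \<phi>')"
      using FT_comp_assoc[OF p(1)] by metis
    also have "\<dots> = \<chi>" using p(3) FT_comp_idr[OF ch] by simp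
    finally show ?thesis using c(3) by simp
  qed
  show ?thesis unfolding FT_iso_def
    using 1 2 FT_comp_hom[OF sc ph ch] FT_comp_hom[OF sc c(1) p(1)] by blast
qed

lemma term_slice_ob: "small_category T \<Longrightarrow> V \<in> obj T \<Longrightarrow> terminal_slice T V \<in> slice_ob T V"
  by (auto simp: terminal_slice_def slice_ob_def FT_ob_def intro: FT_id_hom)

lemma slice_term_iff:
  assumes sc: "small_category T" and V: "V \<in> obj T"
  shows "slice_iso T V A (terminal_slice T V) \<longleftrightarrow> A \<in> slice_ob T V \<and> FT_iso T (fst A) [V] (snd A)"
proof
  assume "slice_iso T V A (terminal_slice T V)"
  then obtain \<phi> where "A \<in> slice_ob T V" "FT_iso T (fst A) [V] \<phi>" "FT_comp T (fst A) (FT_id T [V]) \<phi> = snd A"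
    unfolding slice_iso_def terminal_slice_def by auto
  then show "A \<in> slice_ob T V \<and> FT_iso T (fst A) [V] (snd A)"
    using FT_comp_idl[OF FT_iso_hom] by metis
next
  assume a: "A \<in> slice_ob T V \<and> FT_iso T (fst A) [V] (snd A)"
  then show "slice_iso T V A (terminal_slice T V)"
    unfolding slice_iso_def using term_slice_ob[OF sc V] FT_comp_idl[OF FT_iso_hom[OF conjunct2[OF a]]]
    by (auto simp: terminal_slice_def)
qed

definition yon :: "('o,'m) category \<Rightarrow> 'o \<Rightarrow> 'm \<Rightarrow> ('o,'m) ftmor" where
  "yon T V f = (\<lambda>X x. if X \<in> obj T \<and> x \<in> rep_el T [V] X then (0, cmp T f (snd x)) else undefined)"

lemma yon_hom:
  assumes sc: "small_category T" and f: "f \<in> hom T V W"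
  shows "yon T V f \<in> FT_hom T [V] [W]"
  unfolding FT_hom_def
proof (intro CollectI conjI allI impI ballI)
  fix X x assume "X \<in> obj T" "x \<in> rep_el T [V] X"
  then show "yon T V f X x \<in> rep_el T [W] X"
    using f sc_comp[OF sc] by (auto simp: yon_def rep_el_iff)
next
  fix X X' g x assume a: "X \<in> obj T" "X' \<in> obj T" "g \<in> hom T X' X" "x \<in> rep_el T [V] X"
  have r: "act T g x \<in> rep_el T [V] X'" using act_rep[OF sc a(3,4)] .
  have x: "snd x \<in> hom T X V" using a(4) by (auto simp: rep_el_iff)
  show "yon T V f X' (act T g x) = act T g (yon T V f X x)"
    using a r sc_assoc[OF sc a(3) x f] by (simp add: yon_def act_def)
next
  fix X x assume "\<not> (X \<in> obj T \<and> x \<in> rep_el T [V] X)"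
  then show "yon T V f X x = undefined" unfolding yon_def by meson
qed

lemma yon_pullback:
  assumes sc: "small_category T" and f: "f \<in> hom T V W"
  shows "is_pullback T [W] [V] [W] (FT_id T [W]) (yon T V f) [V] (yon T V f) (FT_id T [V])"
proof -
  have V: "V \<in> obj T" using sc_obj[OF sc f] by blast
  have y: "yon T V f \<in> FT_hom T [V] [W]" using yon_hom[OF sc f] .
  show ?thesis unfolding is_pullback_def
  proof (intro conjI ballI impI)
    show "[V] \<in> FT_ob T" using V by (simp add: FT_ob_def)
    show "yon T V f \<in> FT_hom T [V] [W]" using y .
    show "FT_id T [V] \<in> FT_hom T [V] [V]" using FT_id_hom[OF sc] .
    show "FT_comp T [V] (FT_id T [W]) (yon T V f) = FT_comp T [V] (yon T V f) (FT_id T [V])"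
      using FT_comp_idl[OF y] FT_comp_idr[OF y] by simp
  next
    fix Q a b assume Q: "Q \<in> FT_ob T" and a: "a \<in> FT_hom T Q [W]" and b: "b \<in> FT_hom T Q [V]"
      and e: "FT_comp T Q (FT_id T [W]) a = FT_comp T Q (yon T V f) b"
    show "\<exists>!m. m \<in> FT_hom T Q [V] \<and> FT_comp T Q (yon T V f) m = a \<and> FT_comp T Q (FT_id T [V]) m = b"
    proof (rule ex1I[of _ b])
      show "b \<in> FT_hom T Q [V] \<and> FT_comp T Q (yon T V f) b = a \<and> FT_comp T Q (FT_id T [V]) b = b"
        using b e FT_comp_idl[OF a] FT_comp_idl[OF b] by simp
    next
      fix m assume "m \<in> FT_hom T Q [V] \<and> FT_comp T Q (yon T V f) m = a \<and> FT_comp T Q (FT_id T [V]) m = b"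
      then show "m = b" using FT_comp_idl by metis
    qed
  qed
qed

lemma part1:
  assumes sc: "small_category T" and C: "weak_indexing_system T C"
  shows "T_family T (cfam T C)"
  unfolding T_family_def
proof (intro conjI allI impI)
  show "cfam T C \<subseteq> obj T" by (auto simp: cfam_def)
next
  fix V W f assume f: "f \<in> hom T V W" and W: "W \<in> cfam T C"
  have ob: "V \<in> obj T" "W \<in> obj T" using sc_obj[OF sc f] by auto
  have fs: "full_T_subcat T C" using C unfolding weak_indexing_system_def by blast
  have t: "([W], FT_id T [W]) \<in> C W" using W by (simp add: cfam_def terminal_slice_def)
  have "([V], FT_id T [V]) \<in> C V"
    using fs[unfolded full_T_subcat_def] ob yon_hom[OF sc f] t yon_pullback[OF sc f] by blast
  then show "V \<in> cfam T C" using ob by (simp add: cfam_def terminal_slice_def)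
qed


lemma yon_elem:
  assumes sc: "small_category T" and U: "U \<in> obj T" and \<phi>: "\<phi> \<in> FT_hom T [U] [V]"
  shows "\<exists>f. f \<in> hom T U V"
proof -
  have "(0, idn T U) \<in> rep_el T [U] U" using sc_id[OF sc U] by (simp add: rep_el_iff)
  then have "\<phi> U (0, idn T U) \<in> rep_el T [V] U" using FT_homD1[OF \<phi> U] by blast
  then show ?thesis by (auto simp: rep_el_iff)
qed

lemma part3_full:
  assumes sc: "small_category T" and F: "T_family T F"
  shows "weak_indexing_system T (FF_full T F)"
proof -
  have Fo: "F \<subseteq> obj T" using F by (simp add: T_family_def)
  have fs: "full_T_subcat T (FF_full T F)"
    unfolding full_T_subcat_def
  proof (intro conjI allI impI)
    fix V show "FF_full T F V \<subseteq> slice_ob T V" by (simp add: FF_full_def)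
  next
    fix V A B assume "A \<in> FF_full T F V" "slice_iso T V A B"
    then show "B \<in> FF_full T F V" by (auto simp: FF_full_def slice_iso_def split: if_splits)
  next
    fix U V \<phi> S p P r q
    assume U: "U \<in> obj T" and "V \<in> obj T" and \<phi>: "\<phi> \<in> FT_hom T [U] [V]"
      and Sp: "(S, p) \<in> FF_full T F V" and pb: "is_pullback T S [U] [V] p \<phi> P r q"
    have VF: "V \<in> F" using Sp by (simp add: FF_full_def split: if_splits)
    obtain f where "f \<in> hom T U V" using yon_elem[OF sc U \<phi>] by blast
    then have UF: "U \<in> F" using VF F unfolding T_family_def by blast
    show "(P, q) \<in> FF_full T F U"
      using UF U pb by (simp add: FF_full_def slice_ob_def is_pullback_def)
  qed
  show ?thesis unfolding weak_indexing_system_def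
  proof (intro conjI allI impI fs)
    fix V assume "FF_full T F V \<noteq> {}"
    then have "V \<in> F" by (simp add: FF_full_def split: if_splits)
    then show "terminal_slice T V \<in> FF_full T F V" using Fo term_slice_ob[OF sc] by (auto simp: FF_full_def)
  next
    fix V S p Ts qs X j h
    assume "(S, p) \<in> FF_full T F V" "is_coproduct T (length S) Ts X j" "h \<in> FT_hom T X [V]"
    then show "(X, h) \<in> FF_full T F V" using Fo
      by (auto simp: FF_full_def slice_ob_def is_coproduct_def split: if_splits)
  qed
qed

lemma mem_FF_triv:
  assumes sc: "small_category T" and Fo: "F \<subseteq> obj T"
  shows "A \<in> FF_triv T F V \<longleftrightarrow> V \<in> F \<and> A \<in> slice_ob T V \<and> FT_iso T (fst A) [V] (snd A)"
proof (cases "V \<in> F")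
  case True
  then have "V \<in> obj T" using Fo by blast
  then show ?thesis using slice_term_iff[OF sc, of V A] True by (simp add: FF_triv_def)
qed (simp add: FF_triv_def)

lemma pullback_iso:
  assumes sc: "small_category T" and U: "U \<in> obj T" and \<phi>: "\<phi> \<in> FT_hom T [U] [V]"
    and p: "FT_iso T S [V] p" and pb: "is_pullback T S [U] [V] p \<phi> P r q"
  shows "FT_iso T P [U] q"
proof -
  obtain p' where p': "p' \<in> FT_hom T [V] S" "FT_comp T S p' p = FT_id T S" "FT_comp T [V] p p' = FT_id T [V]"
    using p unfolding FT_iso_def by blast
  have ph: "p \<in> FT_hom T S [V]" using FT_iso_hom[OF p] .
  have P: "P \<in> FT_ob T" and r: "r \<in> FT_hom T P S" and q: "q \<in> FT_hom T P [U]"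
    and sq: "FT_comp T P p r = FT_comp T P \<phi> q"
    and up: "\<forall>Q\<in>FT_ob T. \<forall>a\<in>FT_hom T Q S. \<forall>b\<in>FT_hom T Q [U]. FT_comp T Q p a = FT_comp T Q \<phi> b \<longrightarrow>
        (\<exists>!m. m \<in> FT_hom T Q P \<and> FT_comp T Q r m = a \<and> FT_comp T Q q m = b)"
    using pb unfolding is_pullback_def by blast+
  define a where "a = FT_comp T [U] p' \<phi>"
  have ah: "a \<in> FT_hom T [U] S" unfolding a_def using FT_comp_hom[OF sc \<phi> p'(1)] .
  have "FT_comp T [U] p a = FT_comp T [U] (FT_comp T [V] p p') \<phi>" unfolding a_def using FT_comp_assoc[OF \<phi>] .
  also have "\<dots> = \<phi>" using p'(3) FT_comp_idl[OF \<phi>] by simp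
  also have "\<dots> = FT_comp T [U] \<phi> (FT_id T [U])" using FT_comp_idr[OF \<phi>] by simp
  finally have e: "FT_comp T [U] p a = FT_comp T [U] \<phi> (FT_id T [U])" .
  have Uo: "[U] \<in> FT_ob T" using U by (simp add: FT_ob_def)
  obtain m where m: "m \<in> FT_hom T [U] P" "FT_comp T [U] r m = a" "FT_comp T [U] q m = FT_id T [U]"
    using up Uo ah FT_id_hom[OF sc] e by blast
  have mq: "FT_comp T P m q \<in> FT_hom T P P" using FT_comp_hom[OF sc q m(1)] .
  have 1: "FT_comp T P r (FT_comp T P m q) = r"
  proof -
    have "FT_comp T P r (FT_comp T P m q) = FT_comp T P a q" using FT_comp_assoc[OF q] m(2) by metis
    also have "\<dots> = FT_comp T P p' (FT_comp T P \<phi> q)" unfolding a_def using FT_comp_assoc[OF q] by metis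
    also have "\<dots> = FT_comp T P p' (FT_comp T P p r)" using sq by simp
    also have "\<dots> = FT_comp T P (FT_comp T S p' p) r" using FT_comp_assoc[OF r] .
    also have "\<dots> = r" using p'(2) FT_comp_idl[OF r] by simp
    finally show ?thesis .
  qed
  have 2: "FT_comp T P q (FT_comp T P m q) = q"
    using FT_comp_assoc[OF q] m(3) FT_comp_idl[OF q] by metis
  have uq: "\<exists>!x. x \<in> FT_hom T P P \<and> FT_comp T P r x = r \<and> FT_comp T P q x = q"
    using up P r q sq by blast
  have "FT_comp T P m q = FT_id T P"
    using uq mq 1 2 FT_id_hom[OF sc] FT_comp_idr[OF r] FT_comp_idr[OF q] by blast
  then show ?thesis unfolding FT_iso_def using q m by blast
qed


lemma length_one:
  assumes sc: "small_category T" and S: "S \<in> FT_ob T" and V: "V \<in> obj T" and p: "FT_iso T S [V] p"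
  shows "length S = 1"
proof -
  obtain \<psi> where \<psi>: "\<psi> \<in> FT_hom T [V] S" "FT_comp T S \<psi> p = FT_id T S"
    using p unfolding FT_iso_def by blast
  have ph: "p \<in> FT_hom T S [V]" using FT_iso_hom[OF p] .
  have v0: "(0, idn T V) \<in> rep_el T [V] V" using sc_id[OF sc V] by (simp add: rep_el_iff)
  define e where "e = \<psi> V (0, idn T V)"
  have e: "e \<in> rep_el T S V" unfolding e_def using FT_homD1[OF \<psi>(1) V v0] .
  have all: "i = fst e" if i: "i < length S" for i
  proof -
    have Si: "S ! i \<in> obj T" using S i by (auto simp: FT_ob_def)
    have x: "(i, idn T (S ! i)) \<in> rep_el T S (S ! i)" using sc_id[OF sc Si] i by (simp add: rep_el_iff)
    have px: "p (S ! i) (i, idn T (S ! i)) \<in> rep_el T [V] (S ! i)" using FT_homD1[OF ph Si x] .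
    obtain b where b: "p (S ! i) (i, idn T (S ! i)) = (0, b)" "b \<in> hom T (S ! i) V"
      using px by (cases "p (S ! i) (i, idn T (S ! i))") (auto simp: rep_el_iff)
    have ab: "act T b (0, idn T V) = (0, b)" using sc_idl[OF sc b(2)] by (simp add: act_def)
    have "\<psi> (S ! i) (0, b) = act T b e"
      unfolding e_def using FT_homD2[OF \<psi>(1) V Si b(2) v0] ab by simp
    moreover have "\<psi> (S ! i) (p (S ! i) (i, idn T (S ! i))) = (i, idn T (S ! i))"
      using fun_cong[OF fun_cong[OF \<psi>(2), of "S ! i"], of "(i, idn T (S ! i))"] Si x
      by (simp add: FT_comp_def FT_id_def)
    ultimately show ?thesis using b(1) by (simp add: act_def)
  qed
  have "fst e < length S" using e by (simp add: rep_el_iff)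
  moreover have "\<not> 1 < length S"
  proof
    assume l: "1 < length S"
    then have "0 < length S" by linarith
    from all[OF this] all[OF l] show False by linarith
  qed
  ultimately show ?thesis by linarith
qed

lemma coprod_one:
  assumes sc: "small_category T" and c: "is_coproduct T 1 Ts X j"
  shows "FT_iso T (Ts 0) X (j 0)"
proof -
  have X: "X \<in> FT_ob T" and T0: "Ts 0 \<in> FT_ob T" and j: "j 0 \<in> FT_hom T (Ts 0) X"
    using c unfolding is_coproduct_def by auto
  have up: "\<forall>Y\<in>FT_ob T. \<forall>m. m 0 \<in> FT_hom T (Ts 0) Y \<longrightarrow>
        (\<exists>!u. u \<in> FT_hom T X Y \<and> FT_comp T (Ts 0) u (j 0) = m 0)"
  proof (intro ballI allI impI)
    fix Y and m :: "nat \<Rightarrow> _" assume Y: "Y \<in> FT_ob T" and m: "m 0 \<in> FT_hom T (Ts 0) Y"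
    have "(\<forall>i<(1::nat). m i \<in> FT_hom T (Ts i) Y) \<longrightarrow>
        (\<exists>!u. u \<in> FT_hom T X Y \<and> (\<forall>i<(1::nat). FT_comp T (Ts i) u (j i) = m i))"
    proof -
      have "\<forall>Y\<in>FT_ob T. \<forall>m. (\<forall>i<(1::nat). m i \<in> FT_hom T (Ts i) Y) \<longrightarrow>
        (\<exists>!u. u \<in> FT_hom T X Y \<and> (\<forall>i<(1::nat). FT_comp T (Ts i) u (j i) = m i))"
        using c unfolding is_coproduct_def by (rule conjunct2[OF conjunct2])
      then have "\<forall>m. (\<forall>i<(1::nat). m i \<in> FT_hom T (Ts i) Y) \<longrightarrow>
        (\<exists>!u. u \<in> FT_hom T X Y \<and> (\<forall>i<(1::nat). FT_comp T (Ts i) u (j i) = m i))"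
        using Y by (rule bspec)
      then show ?thesis by (rule spec)
    qed
    then show "\<exists>!u. u \<in> FT_hom T X Y \<and> FT_comp T (Ts 0) u (j 0) = m 0" using m by simp
  qed
  obtain u where u: "u \<in> FT_hom T X (Ts 0)" "FT_comp T (Ts 0) u (j 0) = FT_id T (Ts 0)"
    using up[rule_format, OF T0, of "\<lambda>_. FT_id T (Ts 0)"] FT_id_hom[OF sc] by blast
  have uq: "\<exists>!v. v \<in> FT_hom T X X \<and> FT_comp T (Ts 0) v (j 0) = j 0"
    using up[rule_format, OF X, of "\<lambda>_. j 0"] j by blast
  have 1: "FT_comp T X (j 0) u \<in> FT_hom T X X" using FT_comp_hom[OF sc u(1) j] .
  have 2: "FT_comp T (Ts 0) (FT_comp T X (j 0) u) (j 0) = j 0"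
    using FT_comp_assoc[OF j, of "j 0" u] u(2) FT_comp_idr[OF j] by simp
  have "FT_comp T X (j 0) u = FT_id T X"
    using uq 1 2 FT_id_hom[OF sc] FT_comp_idl[OF j] by blast
  then show ?thesis unfolding FT_iso_def using j u by blast
qed


lemma slice_ob_iff: "(S, p) \<in> slice_ob T V \<longleftrightarrow> V \<in> obj T \<and> S \<in> FT_ob T \<and> p \<in> FT_hom T S [V]"
  by (simp add: slice_ob_def)

lemma part3_triv:
  assumes sc: "small_category T" and F: "T_family T F"
  shows "weak_indexing_system T (FF_triv T F)"
proof -
  have Fo: "F \<subseteq> obj T" using F by (simp add: T_family_def)
  note mem = mem_FF_triv[OF sc Fo]
  have fs: "full_T_subcat T (FF_triv T F)"
    unfolding full_T_subcat_def
  proof (intro conjI allI impI)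
    fix V show "FF_triv T F V \<subseteq> slice_ob T V" using mem by blast
  next
    fix V A B assume A: "A \<in> FF_triv T F V" and AB: "slice_iso T V A B"
    obtain SA pA SB pB where ab: "A = (SA, pA)" "B = (SB, pB)" by (cases A, cases B) auto
    have VF: "V \<in> F" and pA: "FT_iso T SA [V] pA" using A mem ab by auto
    obtain \<phi> where \<phi>: "FT_iso T SA SB \<phi>" "FT_comp T SA pB \<phi> = pA" and Bo: "B \<in> slice_ob T V"
      using AB ab unfolding slice_iso_def by auto
    have pBh: "pB \<in> FT_hom T SB [V]" using Bo ab by (simp add: slice_ob_iff)
    obtain \<phi>' where \<phi>': "FT_iso T SB SA \<phi>'" "FT_comp T SB \<phi> \<phi>' = FT_id T SB"
      using FT_iso_inv[OF \<phi>(1)] by blast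
    have "pB = FT_comp T SB pB (FT_comp T SB \<phi> \<phi>')" using \<phi>'(2) FT_comp_idr[OF pBh] by simp
    also have "\<dots> = FT_comp T SB pA \<phi>'" using FT_comp_assoc[OF FT_iso_hom[OF \<phi>'(1)]] \<phi>(2) by simp
    finally have "FT_iso T SB [V] pB" using FT_iso_comp[OF sc \<phi>'(1) pA] by simp
    then show "B \<in> FF_triv T F V" using mem VF Bo ab by simp
  next
    fix U V \<phi> S p P r q
    assume U: "U \<in> obj T" and "V \<in> obj T" and \<phi>: "\<phi> \<in> FT_hom T [U] [V]"
      and Sp: "(S, p) \<in> FF_triv T F V" and pb: "is_pullback T S [U] [V] p \<phi> P r q"
    have VF: "V \<in> F" and p: "FT_iso T S [V] p" using Sp mem by auto
    obtain f where "f \<in> hom T U V" using yon_elem[OF sc U \<phi>] by blast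
    then have UF: "U \<in> F" using VF F unfolding T_family_def by blast
    have "FT_iso T P [U] q" using pullback_iso[OF sc U \<phi> p pb] .
    then show "(P, q) \<in> FF_triv T F U"
      using mem UF U pb by (simp add: slice_ob_iff is_pullback_def)
  qed
  show ?thesis unfolding weak_indexing_system_def
  proof (intro conjI allI impI fs)
    fix V assume "FF_triv T F V \<noteq> {}"
    then have "V \<in> F" by (simp add: FF_triv_def split: if_splits)
    then show "terminal_slice T V \<in> FF_triv T F V"
      using Fo term_slice_ob[OF sc] mem FT_iso_id[OF sc] by (auto simp: terminal_slice_def)
  next
    fix V S p Ts qs X j h
    assume Sp: "(S, p) \<in> FF_triv T F V" and Tq: "\<forall>i<length S. (Ts i, qs i) \<in> FF_triv T F (S ! i)"
      and c: "is_coproduct T (length S) Ts X j" and h: "h \<in> FT_hom T X [V]"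
      and eq: "\<forall>i<length S. FT_comp T (Ts i) h (j i) =
             FT_comp T (Ts i) p (FT_comp T (Ts i) (incl T S i) (qs i))"
    have VF: "V \<in> F" and p: "FT_iso T S [V] p" and S: "S \<in> FT_ob T" using Sp mem by (auto simp: slice_ob_iff)
    have V: "V \<in> obj T" using VF Fo by blast
    have l: "length S = 1" using length_one[OF sc S V p] .
    have SS: "S = [S ! 0]" using l by (cases S) auto
    have q0: "FT_iso T (Ts 0) [S ! 0] (qs 0)" using Tq l mem by auto
    then have q0': "FT_iso T (Ts 0) S (qs 0)" using SS by metis
    have inc: "incl T S 0 = FT_id T S"
      apply (rule ext, rule ext)
      subgoal for W x using SS l by (cases x) (auto simp: incl_def FT_id_def rep_el_iff)
      done
    have j: "FT_iso T (Ts 0) X (j 0)" using coprod_one[OF sc] c l by simp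
    have hj: "FT_comp T (Ts 0) h (j 0) = FT_comp T (Ts 0) p (qs 0)"
      using eq l inc FT_comp_idl[OF FT_iso_hom[OF q0']] by simp
    have hjiso: "FT_iso T (Ts 0) [V] (FT_comp T (Ts 0) h (j 0))"
      using hj FT_iso_comp[OF sc q0' p] by simp
    obtain j' where j': "FT_iso T X (Ts 0) j'" "FT_comp T X (j 0) j' = FT_id T X"
      using FT_iso_inv[OF j] by blast
    have "h = FT_comp T X h (FT_comp T X (j 0) j')" using j'(2) FT_comp_idr[OF h] by simp
    also have "\<dots> = FT_comp T X (FT_comp T (Ts 0) h (j 0)) j'"
      using FT_comp_assoc[OF FT_iso_hom[OF j'(1)]] by simp
    finally have "FT_iso T X [V] h" using FT_iso_comp[OF sc j'(1) hjiso] by simp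
    moreover have "X \<in> FT_ob T" using c by (simp add: is_coproduct_def)
    ultimately show "(X, h) \<in> FF_triv T F V" using mem VF V h by (simp add: slice_ob_iff)
  qed
qed


lemma term_in_triv:
  assumes sc: "small_category T" and Fo: "F \<subseteq> obj T" and V: "V \<in> F"
  shows "terminal_slice T V \<in> FF_triv T F V"
  using mem_FF_triv[OF sc Fo] V Fo term_slice_ob[OF sc] FT_iso_id[OF sc] by (auto simp: terminal_slice_def)

lemma part4:
  assumes sc: "small_category T" and F: "T_family T F" and C: "weak_indexing_system T C"
  shows "FF_triv T F \<le> C \<longleftrightarrow> F \<subseteq> cfam T C"
proof -
  have Fo: "F \<subseteq> obj T" using F by (simp add: T_family_def)
  note mem = mem_FF_triv[OF sc Fo]
  have fs: "full_T_subcat T C" and tC: "\<forall>V. C V \<noteq> {} \<longrightarrow> terminal_slice T V \<in> C V"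
    using C unfolding weak_indexing_system_def by blast+
  show ?thesis
  proof
    assume le: "FF_triv T F \<le> C"
    show "F \<subseteq> cfam T C"
    proof
      fix V assume V: "V \<in> F"
      then have "terminal_slice T V \<in> C V" using term_in_triv[OF sc Fo V] le by (auto simp: le_fun_def)
      then show "V \<in> cfam T C" using V Fo by (auto simp: cfam_def)
    qed
  next
    assume sub: "F \<subseteq> cfam T C"
    show "FF_triv T F \<le> C" unfolding le_fun_def
    proof (intro allI subsetI)
      fix V A assume A: "A \<in> FF_triv T F V"
      obtain S p where Ap: "A = (S, p)" by (cases A)
      have VF: "V \<in> F" and Ao: "A \<in> slice_ob T V" and p: "FT_iso T S [V] p" using A mem Ap by auto
      have V: "V \<in> obj T" using VF Fo by blast
      have t: "terminal_slice T V \<in> C V" using sub VF by (auto simp: cfam_def)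
      obtain \<psi> where "FT_iso T [V] S \<psi>" "FT_comp T [V] p \<psi> = FT_id T [V]" using FT_iso_inv[OF p] by blast
      then have "slice_iso T V (terminal_slice T V) A"
        unfolding slice_iso_def using term_slice_ob[OF sc V] Ao Ap by (auto simp: terminal_slice_def)
      then show "A \<in> C V" using fs t unfolding full_T_subcat_def by blast
    qed
  qed
qed

lemma part5:
  assumes sc: "small_category T" and F: "T_family T F" and C: "weak_indexing_system T C"
  shows "cfam T C \<subseteq> F \<longleftrightarrow> C \<le> FF_full T F"
proof -
  have fs: "full_T_subcat T C" and tC: "\<forall>V. C V \<noteq> {} \<longrightarrow> terminal_slice T V \<in> C V"
    using C unfolding weak_indexing_system_def by blast+
  have so: "C V \<subseteq> slice_ob T V" for V using fs unfolding full_T_subcat_def by blast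
  show ?thesis
  proof
    assume sub: "cfam T C \<subseteq> F"
    show "C \<le> FF_full T F" unfolding le_fun_def
    proof (intro allI subsetI)
      fix V A assume A: "A \<in> C V"
      then have Ao: "A \<in> slice_ob T V" using so by blast
      then have V: "V \<in> obj T" by (cases A) (simp add: slice_ob_iff)
      have "terminal_slice T V \<in> C V" using tC A by blast
      then have "V \<in> F" using sub V by (auto simp: cfam_def)
      then show "A \<in> FF_full T F V" using Ao by (simp add: FF_full_def)
    qed
  next
    assume le: "C \<le> FF_full T F"
    show "cfam T C \<subseteq> F"
    proof
      fix V assume "V \<in> cfam T C"
      then have "terminal_slice T V \<in> FF_full T F V" using le by (auto simp: cfam_def le_fun_def)
      then show "V \<in> F" by (simp add: FF_full_def split: if_splits)
    qed
  qed
qed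

lemma part6:
  assumes sc: "small_category T" and F: "T_family T F" and G: "T_family T G"
  shows "FF_triv T F \<le> FF_triv T G \<longleftrightarrow> F \<subseteq> G"
proof
  have Fo: "F \<subseteq> obj T" using F by (simp add: T_family_def)
  assume le: "FF_triv T F \<le> FF_triv T G"
  show "F \<subseteq> G"
  proof
    fix V assume "V \<in> F"
    then have "terminal_slice T V \<in> FF_triv T G V" using term_in_triv[OF sc Fo] le by (auto simp: le_fun_def)
    then show "V \<in> G" by (simp add: FF_triv_def split: if_splits)
  qed
next
  assume "F \<subseteq> G" then show "FF_triv T F \<le> FF_triv T G" by (auto simp: le_fun_def FF_triv_def)
qed

lemma part7:
  assumes sc: "small_category T" and F: "T_family T F" and G: "T_family T G"
  shows "FF_full T F \<le> FF_full T G \<longleftrightarrow> F \<subseteq> G"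
proof
  have Fo: "F \<subseteq> obj T" using F by (simp add: T_family_def)
  assume le: "FF_full T F \<le> FF_full T G"
  show "F \<subseteq> G"
  proof
    fix V assume V: "V \<in> F"
    then have "terminal_slice T V \<in> FF_full T F V" using term_slice_ob[OF sc] Fo
      by (auto simp: FF_full_def)
    then have "terminal_slice T V \<in> FF_full T G V" using le by (auto simp: le_fun_def)
    then show "V \<in> G" by (simp add: FF_full_def split: if_splits)
  qed
next
  assume "F \<subseteq> G" then show "FF_full T F \<le> FF_full T G" by (auto simp: le_fun_def FF_full_def)
qed

theorem mainTheorem12:
  fixes T :: "('o,'m) category"
  assumes "orbital T"
  shows
    "(\<forall>C. weak_indexing_system T C \<longrightarrow> T_family T (cfam T C)) \<and>
     (\<forall>C D. weak_indexing_system T C \<longrightarrow> weak_indexing_system T D \<longrightarrow> C \<le> D \<longrightarrow> cfam T C \<subseteq> cfam T D) \<and>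
     (\<forall>F. T_family T F \<longrightarrow> weak_indexing_system T (FF_triv T F) \<and> weak_indexing_system T (FF_full T F)) \<and>
     (\<forall>F C. T_family T F \<longrightarrow> weak_indexing_system T C \<longrightarrow> (FF_triv T F \<le> C \<longleftrightarrow> F \<subseteq> cfam T C)) \<and>
     (\<forall>F C. T_family T F \<longrightarrow> weak_indexing_system T C \<longrightarrow> (cfam T C \<subseteq> F \<longleftrightarrow> C \<le> FF_full T F)) \<and>
     (\<forall>F G. T_family T F \<longrightarrow> T_family T G \<longrightarrow> (FF_triv T F \<le> FF_triv T G \<longleftrightarrow> F \<subseteq> G)) \<and>
     (\<forall>F G. T_family T F \<longrightarrow> T_family T G \<longrightarrow> (FF_full T F \<le> FF_full T G \<longleftrightarrow> F \<subseteq> G))"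
proof -
  have sc: "small_category T" using assms by (simp add: orbital_def)
  have p2: "\<forall>C D. weak_indexing_system T C \<longrightarrow> weak_indexing_system T D \<longrightarrow> C \<le> D \<longrightarrow> cfam T C \<subseteq> cfam T D"
    by (auto simp: cfam_def le_fun_def)
  show ?thesis using part1[OF sc] p2 part3_triv[OF sc] part3_full[OF sc] part4[OF sc] part5[OF sc]
      part6[OF sc] part7[OF sc] by blast
qed

end
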